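(* Let $Q$ be a real affine space modelled on a real vector space $V$ and let $f,f'\in A(Q)$, $n\in\mathbb N$. Suppose that for every $k\le n$ the multidirectional derivatives $\mathrm d^kf(q;w_1,\dots,w_k)$ and $\mathrm d^kf'(q;w_1,\dots,w_k)$ exist (for all $q\in Q$, $w_i\in V$). Then for all $q\in Q$ and $v_1,\dots,v_n\in V$, $$\mathrm d^n(ff')(q;v_1,\dots,v_n)=\sum_{\substack{(I,I')\\ I\cup I'=N,\ I\cap I'=\emptyset}}\mathrm d^{|I|}f(q;\mathbf v^I)\,\mathrm d^{|I'|}f'(q;\mathbf v^{I'}),$$ the sum running over ordered pairs of disjoint (possibly empty) subsets of $N=\{1,\dots,n\}$ with union $N$.
   Context: $A(Q)$: real functions on $Q$. For $I=\{i_1<\dots<i_m\}$, $\mathbf v^I=(v_{i_1},\dots,v_{i_m})$. The $k$-th polarization: $\delta^0f=f$ and for $k\ge1$, $\delta^kf(q;w_1,\dots,w_k)=(-1)^k\sum_{J\subset\{1,\dots,k\}}(-1)^{|J|}f(q+\sum_{j\in J}w_j)$ (the $J=\emptyset$ term is $f(q)$). The $k$-th multidirectional derivative is $\mathrm d^kf(q;w_1,\dots,w_k)=\lim_{s\to0}s^{-k}\delta^kf(q;sw_1,\dots,sw_k)$ when the limit exists; $\mathrm d^0f(q)=f(q)$. *)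

theory Defs
  imports "HOL-Analysis.Analysis"
begin

text \<open>A real affine space Q modelled on a real vector space V, given by a
  simply transitive action act q v = q + v.\<close>

definition affine_space :: "('q \<Rightarrow> 'v::real_vector \<Rightarrow> 'q) \<Rightarrow> bool" where
  "affine_space act \<longleftrightarrow>
     (\<forall>q. act q 0 = q) \<and>
     (\<forall>q v w. act (act q v) w = act q (v + w)) \<and>
     (\<forall>p q. \<exists>!v. act p v = q)"

text \<open>k-th polarization; the directions w_1..w_k are the list ws (k = length ws),
  w_j = ws ! (j-1).\<close>

definition polarization ::
  "('q \<Rightarrow> 'v::real_vector \<Rightarrow> 'q) \<Rightarrow> ('q \<Rightarrow> real) \<Rightarrow> 'q \<Rightarrow> 'v list \<Rightarrow> real" where
  "polarization act f q ws =
     (-1) ^ length ws *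
     (\<Sum>J\<in>Pow {..<length ws}. (-1) ^ card J * f (act q (\<Sum>j\<in>J. ws ! j)))"

definition has_mdd ::
  "('q \<Rightarrow> 'v::real_vector \<Rightarrow> 'q) \<Rightarrow> ('q \<Rightarrow> real) \<Rightarrow> 'q \<Rightarrow> 'v list \<Rightarrow> real \<Rightarrow> bool" where
  "has_mdd act f q ws L \<longleftrightarrow>
     (if ws = [] then L = f q
      else ((\<lambda>s. polarization act f q (map (\<lambda>w. s *\<^sub>R w) ws) / s ^ length ws) \<longlongrightarrow> L) (at 0))"

definition mdd_exists ::
  "('q \<Rightarrow> 'v::real_vector \<Rightarrow> 'q) \<Rightarrow> ('q \<Rightarrow> real) \<Rightarrow> 'q \<Rightarrow> 'v list \<Rightarrow> bool" where
  "mdd_exists act f q ws \<longleftrightarrow> (\<exists>L. has_mdd act f q ws L)"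

definition mdd ::
  "('q \<Rightarrow> 'v::real_vector \<Rightarrow> 'q) \<Rightarrow> ('q \<Rightarrow> real) \<Rightarrow> 'q \<Rightarrow> 'v list \<Rightarrow> real" where
  "mdd act f q ws = (THE L. has_mdd act f q ws L)"

definition subvec :: "(nat \<Rightarrow> 'v) \<Rightarrow> nat set \<Rightarrow> 'v list" where
  "subvec v I = map v (sorted_list_of_set I)"

end

theory Submission
  imports Defs
begin

definition pdiff :: "(nat set \<Rightarrow> real) \<Rightarrow> nat set \<Rightarrow> real" where
  "pdiff F A = (\<Sum>J\<in>Pow A. (-1) ^ (card A + card J) * F J)"

lemma alt_sum:
  assumes "finite M"
  shows "(\<Sum>T\<in>Pow M. (-1::real) ^ card T) = (if M = {} then 1 else 0)"
  using assms
proof (induction M rule: finite_induct)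
  case empty
  then show ?case by simp
next
  case (insert x M)
  have d: "Pow M \<inter> insert x ` Pow M = {}" using insert by auto
  have inj: "inj_on (insert x) (Pow M)" using insert
    by (smt (verit, best) PowD inj_onI insert_ident subset_iff)
  have "(\<Sum>T\<in>insert x ` Pow M. (-1::real) ^ card T) = (\<Sum>T\<in>Pow M. (-1::real) ^ card (insert x T))"
    using sum.reindex[OF inj] by simp
  also have "\<dots> = (\<Sum>T\<in>Pow M. - ((-1::real) ^ card T))"
  proof (rule sum.cong)
    fix T assume "T \<in> Pow M"
    then have "finite T" "x \<notin> T" using insert finite_subset by auto
    then show "(-1::real) ^ card (insert x T) = - ((-1) ^ card T)" by simp
  qed simp
  finally have e: "(\<Sum>T\<in>insert x ` Pow M. (-1::real) ^ card T) = - (\<Sum>T\<in>Pow M. (-1::real) ^ card T)"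
    by (simp add: sum_negf)
  have "(\<Sum>T\<in>Pow (insert x M). (-1::real) ^ card T) =
     (\<Sum>T\<in>Pow M. (-1::real) ^ card T) + (\<Sum>T\<in>insert x ` Pow M. (-1::real) ^ card T)"
    unfolding Pow_insert using d insert by (intro sum.union_disjoint) auto
  then show ?case using e by simp
qed

lemma neg1_sq: "(-1::real)^k * (-1)^k = 1"
  by (simp add: power_mult_distrib[symmetric])

lemma sign_split: "(-1::real) ^ (a + b) = (-1) ^ (a + k) * (-1) ^ (b + k)"
proof -
  have "(-1::real) ^ (a + k) * (-1) ^ (b + k) = (-1) ^ (a + b) * ((-1) ^ k * (-1) ^ k)"
    by (simp only: power_add mult_ac)
  then show ?thesis by (simp only: neg1_sq mult_1_right)
qed

lemma alt_sum2:
  assumes "finite N" "S \<subseteq> N"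
  shows "(\<Sum>L\<in>{L. S \<subseteq> L \<and> L \<subseteq> N}. (-1::real) ^ (card L + card S)) = (if S = N then 1 else 0)"
proof -
  have fS: "finite S" using assms finite_subset by blast
  have inj: "inj_on (\<lambda>T. S \<union> T) (Pow (N - S))"
    by (rule inj_onI) auto
  have im: "(\<lambda>T. S \<union> T) ` Pow (N - S) = {L. S \<subseteq> L \<and> L \<subseteq> N}"
  proof
    show "{L. S \<subseteq> L \<and> L \<subseteq> N} \<subseteq> (\<lambda>T. S \<union> T) ` Pow (N - S)"
    proof
      fix L assume "L \<in> {L. S \<subseteq> L \<and> L \<subseteq> N}"
      then have "L = S \<union> (L - S)" "L - S \<in> Pow (N - S)" by auto
      then show "L \<in> (\<lambda>T. S \<union> T) ` Pow (N - S)" by blast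
    qed
  qed (use assms in auto)
  have "(\<Sum>L\<in>{L. S \<subseteq> L \<and> L \<subseteq> N}. (-1::real) ^ (card L + card S))
      = (\<Sum>T\<in>Pow (N - S). (-1::real) ^ (card (S \<union> T) + card S))"
    using sum.reindex[OF inj] im by simp
  also have "\<dots> = (\<Sum>T\<in>Pow (N - S). (-1::real) ^ card T)"
  proof (rule sum.cong)
    fix T assume "T \<in> Pow (N - S)"
    then have TN: "T \<subseteq> N" and dis: "S \<inter> T = {}" by auto
    have fT: "finite T" using TN assms(1) by (rule finite_subset)
    have c: "card (S \<union> T) = card S + card T" using card_Un_disjoint[OF fS fT dis] .
    have "(-1::real) ^ (card (S \<union> T) + card S) = (-1) ^ card T * ((-1) ^ card S * (-1) ^ card S)"
      unfolding c by (simp only: power_add mult_ac)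
    then show "(-1::real) ^ (card (S \<union> T) + card S) = (-1) ^ card T"
      by (simp only: neg1_sq mult_1_right)
  qed simp
  also have "\<dots> = (if S = N then 1 else 0)"
    using alt_sum[of "N - S"] assms by auto
  finally show ?thesis .
qed

lemma pdiff_inv:
  assumes "finite L"
  shows "(\<Sum>A\<in>Pow L. pdiff F A) = F L"
proof -
  have "(\<Sum>A\<in>Pow L. pdiff F A) =
     (\<Sum>A\<in>Pow L. \<Sum>J\<in>Pow L. if J \<subseteq> A then (-1) ^ (card A + card J) * F J else 0)"
  proof (rule sum.cong)
    fix A assume A: "A \<in> Pow L"
    have "Pow A = {J \<in> Pow L. J \<subseteq> A}" using A by auto
    then have "pdiff F A = (\<Sum>J\<in>{J \<in> Pow L. J \<subseteq> A}. (-1) ^ (card A + card J) * F J)"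
      unfolding pdiff_def by simp
    also have "\<dots> = (\<Sum>J\<in>Pow L. if J \<subseteq> A then (-1) ^ (card A + card J) * F J else 0)"
      using assms by (intro sum.inter_filter) simp
    finally show "pdiff F A = (\<Sum>J\<in>Pow L. if J \<subseteq> A then (-1) ^ (card A + card J) * F J else 0)" .
  qed simp
  also have "\<dots> = (\<Sum>J\<in>Pow L. \<Sum>A\<in>Pow L. if J \<subseteq> A then (-1) ^ (card A + card J) * F J else 0)"
    by (rule sum.swap)
  also have "\<dots> = (\<Sum>J\<in>Pow L. F J * (if J = L then 1 else 0))"
  proof (rule sum.cong)
    fix J assume J: "J \<in> Pow L"
    have "(\<Sum>A\<in>Pow L. if J \<subseteq> A then (-1) ^ (card A + card J) * F J else 0)
       = (\<Sum>A\<in>{A \<in> Pow L. J \<subseteq> A}. (-1) ^ (card A + card J) * F J)"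
      using assms by (intro sum.inter_filter[symmetric]) simp
    also have "{A \<in> Pow L. J \<subseteq> A} = {A. J \<subseteq> A \<and> A \<subseteq> L}" by auto
    also have "(\<Sum>A\<in>{A. J \<subseteq> A \<and> A \<subseteq> L}. (-1) ^ (card A + card J) * F J)
        = F J * (\<Sum>A\<in>{A. J \<subseteq> A \<and> A \<subseteq> L}. (-1::real) ^ (card A + card J))"
      by (simp add: sum_distrib_left mult.commute)
    also have "\<dots> = F J * (if J = L then 1 else 0)"
      using alt_sum2[of L J] assms J by simp
    finally show "(\<Sum>A\<in>Pow L. if J \<subseteq> A then (-1) ^ (card A + card J) * F J else 0) = F J * (if J = L then 1 else 0)" .
  qed simp
  also have "\<dots> = (\<Sum>J\<in>Pow L. if J = L then F J else 0)" by (rule sum.cong) auto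
  also have "\<dots> = F L" using assms by (simp add: sum.delta)
  finally show ?thesis .
qed

lemma pdiff_leibniz:
  assumes "finite N"
  shows "pdiff (\<lambda>L. F L * G L) N =
    (\<Sum>A\<in>Pow N. \<Sum>B\<in>Pow N. if A \<union> B = N then pdiff F A * pdiff G B else 0)"
proof -
  let ?c = "\<lambda>L. (-1::real) ^ (card N + card L)"
  have "pdiff (\<lambda>L. F L * G L) N = (\<Sum>L\<in>Pow N. ?c L * (F L * G L))"
    unfolding pdiff_def ..
  also have "\<dots> = (\<Sum>L\<in>Pow N. \<Sum>A\<in>Pow N. \<Sum>B\<in>Pow N.
      if A \<subseteq> L \<and> B \<subseteq> L then ?c L * (pdiff F A * pdiff G B) else 0)"
  proof (rule sum.cong)
    fix L assume L: "L \<in> Pow N"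
    then have fL: "finite L" using assms finite_subset by blast
    have PL: "Pow L = {A \<in> Pow N. A \<subseteq> L}" using L by auto
    have "?c L * (F L * G L) = ?c L * ((\<Sum>A\<in>Pow L. pdiff F A) * (\<Sum>B\<in>Pow L. pdiff G B))"
      using pdiff_inv[OF fL] by simp
    also have "\<dots> = (\<Sum>A\<in>Pow L. \<Sum>B\<in>Pow L. ?c L * (pdiff F A * pdiff G B))"
      unfolding sum_product by (simp only: sum_distrib_left)
    also have "\<dots> = (\<Sum>A\<in>Pow N. if A \<subseteq> L then (\<Sum>B\<in>Pow L. ?c L * (pdiff F A * pdiff G B)) else 0)"
      unfolding PL[of] using assms by (intro sum.inter_filter) simp
    also have "\<dots> = (\<Sum>A\<in>Pow N. \<Sum>B\<in>Pow N.
      if A \<subseteq> L \<and> B \<subseteq> L then ?c L * (pdiff F A * pdiff G B) else 0)"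
    proof (rule sum.cong)
      fix A assume "A \<in> Pow N"
      have "(\<Sum>B\<in>Pow L. ?c L * (pdiff F A * pdiff G B)) =
         (\<Sum>B\<in>Pow N. if B \<subseteq> L then ?c L * (pdiff F A * pdiff G B) else 0)"
        unfolding PL using assms by (intro sum.inter_filter) simp
      then show "(if A \<subseteq> L then (\<Sum>B\<in>Pow L. ?c L * (pdiff F A * pdiff G B)) else 0) =
        (\<Sum>B\<in>Pow N. if A \<subseteq> L \<and> B \<subseteq> L then ?c L * (pdiff F A * pdiff G B) else 0)"
        by simp
    qed simp
    finally show "?c L * (F L * G L) = (\<Sum>A\<in>Pow N. \<Sum>B\<in>Pow N.
      if A \<subseteq> L \<and> B \<subseteq> L then ?c L * (pdiff F A * pdiff G B) else 0)" .
  qed simp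
  also have "\<dots> = (\<Sum>A\<in>Pow N. \<Sum>L\<in>Pow N. \<Sum>B\<in>Pow N.
      if A \<subseteq> L \<and> B \<subseteq> L then ?c L * (pdiff F A * pdiff G B) else 0)"
    by (rule sum.swap)
  also have "\<dots> = (\<Sum>A\<in>Pow N. \<Sum>B\<in>Pow N. \<Sum>L\<in>Pow N.
      if A \<subseteq> L \<and> B \<subseteq> L then ?c L * (pdiff F A * pdiff G B) else 0)"
    by (rule sum.cong[OF refl], rule sum.swap)
  also have "\<dots> = (\<Sum>A\<in>Pow N. \<Sum>B\<in>Pow N. if A \<union> B = N then pdiff F A * pdiff G B else 0)"
  proof (intro sum.cong refl)
    fix A B assume A: "A \<in> Pow N" and B: "B \<in> Pow N"
    have "(\<Sum>L\<in>Pow N. if A \<subseteq> L \<and> B \<subseteq> L then ?c L * (pdiff F A * pdiff G B) else 0)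
       = (\<Sum>L\<in>{L \<in> Pow N. A \<union> B \<subseteq> L}. ?c L * (pdiff F A * pdiff G B))"
      using assms by (subst sum.inter_filter) auto
    also have "{L \<in> Pow N. A \<union> B \<subseteq> L} = {L. A \<union> B \<subseteq> L \<and> L \<subseteq> N}" by auto
    also have "(\<Sum>L\<in>{L. A \<union> B \<subseteq> L \<and> L \<subseteq> N}. ?c L * (pdiff F A * pdiff G B))
       = (pdiff F A * pdiff G B) * ((-1) ^ (card N + card (A \<union> B)) *
           (\<Sum>L\<in>{L. A \<union> B \<subseteq> L \<and> L \<subseteq> N}. (-1::real) ^ (card L + card (A \<union> B))))"
      unfolding sum_distrib_left
      by (rule sum.cong[OF refl], subst sign_split[where k="card (A \<union> B)"], simp only: mult_ac)
    also have "\<dots> = (if A \<union> B = N then pdiff F A * pdiff G B else 0)"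
      using alt_sum2[of N "A \<union> B"] assms A B by (auto simp: power_add neg1_sq)
    finally show "(\<Sum>L\<in>Pow N. if A \<subseteq> L \<and> B \<subseteq> L then ?c L * (pdiff F A * pdiff G B) else 0)
      = (if A \<union> B = N then pdiff F A * pdiff G B else 0)" .
  qed
  finally show ?thesis .
qed

lemma polar_subvec:
  assumes fin: "finite I"
  shows "polarization act h q (subvec u I) = pdiff (\<lambda>J. h (act q (\<Sum>j\<in>J. u j))) I"
proof -
  define xs where "xs = sorted_list_of_set I"
  define g where "g = (\<lambda>j. xs ! j)"
  have len: "length xs = card I" unfolding xs_def by simp
  have dist: "distinct xs" unfolding xs_def by simp
  have injg: "inj_on g {..<card I}" unfolding g_def using dist len by (intro inj_on_nth) auto
  have img: "g ` {..<card I} = I"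
  proof -
    have "g ` {..<card I} = set xs" unfolding g_def using len by (simp add: set_conv_nth image_def) (auto)
    then show ?thesis unfolding xs_def using fin by simp
  qed
  have "polarization act h q (subvec u I) =
     (\<Sum>J\<in>Pow {..<card I}. (-1) ^ (card I + card J) * h (act q (\<Sum>j\<in>J. u (g j))))"
    unfolding polarization_def subvec_def xs_def[symmetric] sum_distrib_left
  proof (rule sum.cong)
    fix J assume J: "J \<in> Pow {..<card I}"
    have "(\<Sum>j\<in>J. map u xs ! j) = (\<Sum>j\<in>J. u (g j))"
      using J len unfolding g_def by (intro sum.cong) auto
    then show "(-1) ^ length (map u xs) * ((-1) ^ card J * h (act q (\<Sum>j\<in>J. map u xs ! j))) =
        (-1) ^ (card I + card J) * h (act q (\<Sum>j\<in>J. u (g j)))"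
      using len by (simp add: power_add)
  qed (simp add: len)
  also have "\<dots> = (\<Sum>J\<in>Pow {..<card I}. (-1) ^ (card I + card (g ` J)) * h (act q (\<Sum>j\<in>g ` J. u j)))"
  proof (rule sum.cong)
    fix J assume J: "J \<in> Pow {..<card I}"
    then have ij: "inj_on g J" using injg inj_on_subset by blast
    show "(-1) ^ (card I + card J) * h (act q (\<Sum>j\<in>J. u (g j))) =
        (-1) ^ (card I + card (g ` J)) * h (act q (\<Sum>j\<in>g ` J. u j))"
      using ij by (simp add: card_image sum.reindex)
  qed simp
  also have "\<dots> = pdiff (\<lambda>J. h (act q (\<Sum>j\<in>J. u j))) I"
  proof -
    have "pdiff (\<lambda>J. h (act q (\<Sum>j\<in>J. u j))) I =
      (\<Sum>J\<in>image g ` Pow {..<card I}. (-1) ^ (card I + card J) * h (act q (\<Sum>j\<in>J. u j)))"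
      unfolding pdiff_def image_Pow_surj[OF img] ..
    also have "\<dots> = (\<Sum>J\<in>Pow {..<card I}. (-1) ^ (card I + card (g ` J)) * h (act q (\<Sum>j\<in>g ` J. u j)))"
      using sum.reindex[OF inj_on_image_Pow[OF injg]] by simp
    finally show ?thesis by simp
  qed
  finally show ?thesis .
qed

lemma mdd_has:
  assumes "mdd_exists act f q ws"
  shows "has_mdd act f q ws (mdd act f q ws)"
proof -
  obtain L where L: "has_mdd act f q ws L" using assms unfolding mdd_exists_def by blast
  have "L' = L" if L': "has_mdd act f q ws L'" for L'
  proof (cases "ws = []")
    case True
    then show ?thesis using L L' unfolding has_mdd_def by simp
  next
    case False
    have t1: "((\<lambda>s. polarization act f q (map (\<lambda>w. s *\<^sub>R w) ws) / s ^ length ws) \<longlongrightarrow> L) (at (0::real))"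
      using L False unfolding has_mdd_def by simp
    have t2: "((\<lambda>s. polarization act f q (map (\<lambda>w. s *\<^sub>R w) ws) / s ^ length ws) \<longlongrightarrow> L') (at (0::real))"
      using L' False unfolding has_mdd_def by simp
    show ?thesis using tendsto_unique[OF at_neq_bot t2 t1] .
  qed
  then have "mdd act f q ws = L" unfolding mdd_def using L by (intro the_equality) blast+
  then show ?thesis using L by simp
qed

lemma limit_part:
  fixes PF PG :: "nat set \<Rightarrow> real \<Rightarrow> real"
  assumes "finite N"
    and "\<And>A. A \<subseteq> N \<Longrightarrow> (PF A \<longlongrightarrow> a A) (at 0)"
    and "\<And>B. B \<subseteq> N \<Longrightarrow> (PG B \<longlongrightarrow> b B) (at 0)"
  shows "((\<lambda>s. \<Sum>A\<in>Pow N. \<Sum>B\<in>Pow N. if A \<union> B = N then PF A s * PG B s * s ^ (card A + card B - card N) else 0)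
     \<longlongrightarrow> (\<Sum>A\<in>Pow N. \<Sum>B\<in>Pow N. if A \<union> B = N then a A * b B * 0 ^ (card A + card B - card N) else 0)) (at 0)"
proof (intro tendsto_sum)
  fix A B assume A: "A \<in> Pow N" and B: "B \<in> Pow N"
  show "((\<lambda>s. if A \<union> B = N then PF A s * PG B s * s ^ (card A + card B - card N) else 0)
     \<longlongrightarrow> (if A \<union> B = N then a A * b B * 0 ^ (card A + card B - card N) else 0)) (at 0)"
  proof (cases "A \<union> B = N")
    case True
    have "((\<lambda>s. PF A s * PG B s * s ^ (card A + card B - card N))
     \<longlongrightarrow> a A * b B * 0 ^ (card A + card B - card N)) (at 0)"
      using A B assms by (intro tendsto_mult tendsto_power tendsto_ident_at) auto
    then show ?thesis using True by simp
  qed simp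
qed

lemma final_sum:
  fixes a b :: "nat set \<Rightarrow> real"
  assumes fin: "finite N"
  shows "(\<Sum>A\<in>Pow N. \<Sum>B\<in>Pow N. if A \<union> B = N then a A * b B * 0 ^ (card A + card B - card N) else 0)
    = (\<Sum>(I, I')\<in>{(I, I'). I \<union> I' = N \<and> I \<inter> I' = {}}. a I * b I')"
proof -
  have "(\<Sum>A\<in>Pow N. \<Sum>B\<in>Pow N. if A \<union> B = N then a A * b B * 0 ^ (card A + card B - card N) else 0)
     = (\<Sum>(A,B)\<in>Pow N \<times> Pow N. if A \<union> B = N then a A * b B * 0 ^ (card A + card B - card N) else 0)"
    by (rule sum.cartesian_product)
  also have "\<dots> = (\<Sum>(A,B)\<in>Pow N \<times> Pow N. if A \<union> B = N \<and> A \<inter> B = {} then a A * b B else 0)"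
  proof (rule sum.cong[OF refl])
    fix p assume p: "p \<in> Pow N \<times> Pow N"
    obtain A B where pAB: "p = (A, B)" by (cases p)
    have A: "A \<subseteq> N" and B: "B \<subseteq> N" using p pAB by auto
    then have fA: "finite A" and fB: "finite B" using fin finite_subset by blast+
    have "(if A \<union> B = N then a A * b B * 0 ^ (card A + card B - card N) else 0) =
       (if A \<union> B = N \<and> A \<inter> B = {} then a A * b B else 0)"
    proof (cases "A \<union> B = N")
      case True
      have "card A + card B = card N + card (A \<inter> B)"
        using card_Un_Int[OF fA fB] True by simp
      then have c: "card A + card B - card N = card (A \<inter> B)" by simp
      show ?thesis
      proof (cases "A \<inter> B = {}")
        case True2: True
        then show ?thesis using True c by simp
      next
        case False
        then have "card (A \<inter> B) > 0" using fA by (simp add: card_gt_0_iff)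
        then show ?thesis using True False c by simp
      qed
    qed simp
    then show "(case p of (A, B) \<Rightarrow> if A \<union> B = N then a A * b B * 0 ^ (card A + card B - card N) else 0) =
       (case p of (A, B) \<Rightarrow> if A \<union> B = N \<and> A \<inter> B = {} then a A * b B else 0)"
      using pAB by simp
  qed
  also have "\<dots> = (\<Sum>p\<in>{p \<in> Pow N \<times> Pow N. fst p \<union> snd p = N \<and> fst p \<inter> snd p = {}}. a (fst p) * b (snd p))"
    using fin by (subst sum.inter_filter) (auto simp: case_prod_beta)
  also have "{p \<in> Pow N \<times> Pow N. fst p \<union> snd p = N \<and> fst p \<inter> snd p = {}} = {(I, I'). I \<union> I' = N \<and> I \<inter> I' = {}}"
    by auto
  finally show ?thesis by (simp add: case_prod_beta)
qed

theorem theorem1: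
  fixes act :: "'q \<Rightarrow> 'v::real_vector \<Rightarrow> 'q"
    and f f' :: "'q \<Rightarrow> real" and n :: nat
  assumes "affine_space act"
    and "\<And>k q ws. k \<le> n \<Longrightarrow> length ws = k \<Longrightarrow> mdd_exists act f q ws"
    and "\<And>k q ws. k \<le> n \<Longrightarrow> length ws = k \<Longrightarrow> mdd_exists act f' q ws"
  shows "\<forall>q (v :: nat \<Rightarrow> 'v).
    has_mdd act (\<lambda>p. f p * f' p) q (subvec v {1..n})
      (\<Sum>(I, I')\<in>{(I, I'). I \<union> I' = {1..n} \<and> I \<inter> I' = {}}.
          mdd act f q (subvec v I) * mdd act f' q (subvec v I'))"
proof (intro allI)
  fix q and v :: "nat \<Rightarrow> 'v"
  define N where "N = {1..n}"
  have finN: "finite N" and cardN: "card N = n" unfolding N_def by auto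
  have act0: "act q 0 = q" using assms(1) unfolding affine_space_def by blast
  have mdd0: "mdd act h q [] = h q" for h :: "'q \<Rightarrow> real"
    unfolding mdd_def has_mdd_def by simp
  have key: "((\<lambda>s. pdiff (\<lambda>J. h (act q (\<Sum>j\<in>J. s *\<^sub>R v j))) A / s ^ card A)
       \<longlongrightarrow> mdd act h q (subvec v A)) (at 0)"
    if ex: "\<And>k q ws. k \<le> n \<Longrightarrow> length ws = k \<Longrightarrow> mdd_exists act h q ws" and A: "A \<subseteq> N"
    for h :: "'q \<Rightarrow> real" and A
  proof (cases "A = {}")
    case True
    then show ?thesis by (simp add: pdiff_def subvec_def act0 mdd0)
  next
    case False
    have fA: "finite A" using A finN finite_subset by blast
    have lenA: "length (subvec v A) = card A" unfolding subvec_def by simp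
    have "card A \<le> n" using A finN cardN card_mono by blast
    then have "has_mdd act h q (subvec v A) (mdd act h q (subvec v A))"
      using ex lenA by (intro mdd_has) blast
    moreover have "subvec v A \<noteq> []" using lenA False fA by auto
    ultimately have t: "((\<lambda>s. polarization act h q (map (\<lambda>w. s *\<^sub>R w) (subvec v A)) / s ^ card A)
       \<longlongrightarrow> mdd act h q (subvec v A)) (at 0)"
      unfolding has_mdd_def lenA by simp
    have "polarization act h q (map (\<lambda>w. s *\<^sub>R w) (subvec v A)) =
      pdiff (\<lambda>J. h (act q (\<Sum>j\<in>J. s *\<^sub>R v j))) A" for s :: real
    proof -
      have "map (\<lambda>w. s *\<^sub>R w) (subvec v A) = subvec (\<lambda>j. s *\<^sub>R v j) A"
        unfolding subvec_def by simp
      then show ?thesis using polar_subvec[OF fA] by simp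
    qed
    then show ?thesis using t by simp
  qed
  define PF where "PF = (\<lambda>A s. pdiff (\<lambda>J. f (act q (\<Sum>j\<in>J. s *\<^sub>R v j))) A / s ^ card A)"
  define PG where "PG = (\<lambda>A s. pdiff (\<lambda>J. f' (act q (\<Sum>j\<in>J. s *\<^sub>R v j))) A / s ^ card A)"
  have lim: "((\<lambda>s. \<Sum>A\<in>Pow N. \<Sum>B\<in>Pow N. if A \<union> B = N then PF A s * PG B s * s ^ (card A + card B - card N) else 0)
     \<longlongrightarrow> (\<Sum>(I, I')\<in>{(I, I'). I \<union> I' = N \<and> I \<inter> I' = {}}.
          mdd act f q (subvec v I) * mdd act f' q (subvec v I'))) (at 0)"
    unfolding final_sum[OF finN, symmetric]
    by (rule limit_part[OF finN]) (unfold PF_def PG_def, (rule key[OF assms(2)] key[OF assms(3)]; assumption)+)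
  have eq: "polarization act (\<lambda>p. f p * f' p) q (map (\<lambda>w. s *\<^sub>R w) (subvec v N)) / s ^ length (subvec v N) =
     (\<Sum>A\<in>Pow N. \<Sum>B\<in>Pow N. if A \<union> B = N then PF A s * PG B s * s ^ (card A + card B - card N) else 0)"
    if s: "s \<noteq> 0" for s :: real
  proof -
    let ?F = "\<lambda>J. f (act q (\<Sum>j\<in>J. s *\<^sub>R v j))"
    let ?G = "\<lambda>J. f' (act q (\<Sum>j\<in>J. s *\<^sub>R v j))"
    have "map (\<lambda>w. s *\<^sub>R w) (subvec v N) = subvec (\<lambda>j. s *\<^sub>R v j) N"
      unfolding subvec_def by simp
    then have "polarization act (\<lambda>p. f p * f' p) q (map (\<lambda>w. s *\<^sub>R w) (subvec v N)) =
      pdiff (\<lambda>J. ?F J * ?G J) N"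
      using polar_subvec[OF finN, of act "\<lambda>p. f p * f' p" q "\<lambda>j. s *\<^sub>R v j"] by simp
    also have "\<dots> = (\<Sum>A\<in>Pow N. \<Sum>B\<in>Pow N. if A \<union> B = N then pdiff ?F A * pdiff ?G B else 0)"
      by (rule pdiff_leibniz[OF finN])
    finally have p: "polarization act (\<lambda>p. f p * f' p) q (map (\<lambda>w. s *\<^sub>R w) (subvec v N)) = \<dots>" .
    have len: "length (subvec v N) = card N" unfolding subvec_def by simp
    show ?thesis unfolding p len sum_divide_distrib
    proof (intro sum.cong refl)
      fix A B assume A: "A \<in> Pow N" and B: "B \<in> Pow N"
      show "(if A \<union> B = N then pdiff ?F A * pdiff ?G B else 0) / s ^ card N =
         (if A \<union> B = N then PF A s * PG B s * s ^ (card A + card B - card N) else 0)"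
      proof (cases "A \<union> B = N")
        case True
        have fA: "finite A" and fB: "finite B" using A B finN finite_subset by blast+
        have "card N \<le> card A + card B" using True card_Un_le by metis
        then obtain k where k: "card A + card B = card N + k" using le_Suc_ex by blast
        have "s ^ card A * s ^ card B = s ^ card N * s ^ k" using k by (simp add: power_add[symmetric])
        then show ?thesis using True s k unfolding PF_def PG_def
          by (simp add: field_simps)
      qed simp
    qed
  qed
  show "has_mdd act (\<lambda>p. f p * f' p) q (subvec v {1..n})
      (\<Sum>(I, I')\<in>{(I, I'). I \<union> I' = {1..n} \<and> I \<inter> I' = {}}.
          mdd act f q (subvec v I) * mdd act f' q (subvec v I'))"
  proof (cases "n = 0")
    case True
    have "{(I, I'). I \<union> I' = {1..n} \<and> I \<inter> I' = {}} = {({}, {})}" using True by auto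
    then show ?thesis using True by (simp add: has_mdd_def subvec_def mdd0)
  next
    case False
    have ne: "subvec v N \<noteq> []" using False finN cardN unfolding subvec_def by auto
    have "((\<lambda>s. polarization act (\<lambda>p. f p * f' p) q (map (\<lambda>w. s *\<^sub>R w) (subvec v N)) / s ^ length (subvec v N))
      \<longlongrightarrow> (\<Sum>(I, I')\<in>{(I, I'). I \<union> I' = N \<and> I \<inter> I' = {}}.
          mdd act f q (subvec v I) * mdd act f' q (subvec v I'))) (at 0)"
      by (rule Lim_transform_eventually[OF lim]) (auto simp: eventually_at eq intro!: exI[of _ 1])
    then show ?thesis using ne unfolding has_mdd_def N_def by simp
  qed
qed

end
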